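(* Let $M,N\in\mathbb N$ and let $\mathcal Q\in\mathbb M_{\mathrm{TS}}$. Then for every T-junction $v\in\mathsf T(\mathcal Q)$ there is a unique element $Q_v\in\mathcal Q$ with $v\in\mathsf T(Q_v)$. Moreover, the sets $\mathsf T_{\mathrm h}(\mathcal Q)$ and $\mathsf T_{\mathrm v}(\mathcal Q)$ are disjoint and $\mathsf T_{\mathrm h}(\mathcal Q)\cup\mathsf T_{\mathrm v}(\mathcal Q)=\mathsf T(\mathcal Q)$.
   Context: Let $\mathcal Q_0=\{[m-1,m]\times[n-1,n]: m\in\{1,\dots,M\},\ n\in\{1,\dots,N\}\}$. For a rectangle $Q=[x,x+\tilde x]\times[y,y+\tilde y]$, $j\in\{1,2\}$ and $0<q<1$, define $\mathrm{bisect}_{j,q}(Q)=\{[x,x+q\tilde x]\times[y,y+\tilde y],\ [x+q\tilde x,x+\tilde x]\times[y,y+\tilde y]\}$ if $j=1$ and $\mathrm{bisect}_{j,q}(Q)=\{[x,x+\tilde x]\times[y,y+q\tilde y],\ [x,x+\tilde x]\times[y+q\tilde y,y+\tilde y]\}$ if $j=2$. The mesh class $\mathbb M_{\mathrm{TS}}$ is the smallest set of finite sets of closed rectangles such that $\mathcal Q_0\in\mathbb M_{\mathrm{TS}}$ and, whenever $\mathcal Q\in\mathbb M_{\mathrm{TS}}$, $Q\in\mathcal Q$, $j\in\{1,2\}$, $0<q<1$, also $(\mathcal Q\setminus\{Q\})\cup\mathrm{bisect}_{j,q}(Q)\in\mathbb M_{\mathrm{TS}}$. For $Q=[x,x+\tilde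 x]\times[y,y+\tilde y]$ define the vertex set $\mathsf V(Q)=\{x,x+\tilde x\}\times\{y,y+\tilde y\}$, the vertical sides $\mathrm{vsk}(Q)=\{x,x+\tilde x\}\times[y,y+\tilde y]$ and horizontal sides $\mathrm{hsk}(Q)=[x,x+\tilde x]\times\{y,y+\tilde y\}$. For a mesh $\mathcal Q$, $\mathsf V(\mathcal Q)=\bigcup_{Q\in\mathcal Q}\mathsf V(Q)$; for $Q\in\mathcal Q$, $\mathsf T(Q)=(\mathsf V(\mathcal Q)\cap Q)\setminus\mathsf V(Q)$ and $\mathsf T(\mathcal Q)=\bigcup_{Q\in\mathcal Q}\mathsf T(Q)$ (T-junctions). Further $\mathsf T_{\mathrm h}(Q)=\{v\in\mathsf T(Q): v\in\mathrm{vsk}(Q)\}$, $\mathsf T_{\mathrm v}(Q)=\{v\in\mathsf T(Q): v\in\mathrm{hsk}(Q)\}$, $\mathsf T_{\mathrm h}(\mathcal Q)=\bigcup_{Q\in\mathcal Q}\mathsf T_{\mathrm h}(Q)$, $\mathsf T_{\mathrm v}(\mathcal Q)=\bigcup_{Q\in\mathcal Q}\mathsf T_{\mathrm v}(Q)$. *)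

theory Defs
  imports Main "HOL.Real"
begin

text \<open>A closed rectangle [x, x + a] \<times> [y, y + b] is encoded by its parameters (x, a, y, b).\<close>
type_synonym rect = "real \<times> real \<times> real \<times> real"

fun rect_pts :: "rect \<Rightarrow> (real \<times> real) set" where
  "rect_pts (x, a, y, b) = {x..x+a} \<times> {y..y+b}"

definition Q0 :: "nat \<Rightarrow> nat \<Rightarrow> rect set" where
  "Q0 M N = {(real m - 1, 1, real n - 1, 1) | m n. m \<in> {1..M} \<and> n \<in> {1..N}}"

fun bisect :: "nat \<Rightarrow> real \<Rightarrow> rect \<Rightarrow> rect set" where
  "bisect j q (x, a, y, b) =
     (if j = 1 then {(x, q*a, y, b), (x + q*a, a - q*a, y, b)}
      else {(x, a, y, q*b), (x, a, y + q*b, b - q*b)})"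

inductive_set MTS :: "nat \<Rightarrow> nat \<Rightarrow> rect set set" for M N where
  base: "Q0 M N \<in> MTS M N"
| step: "\<lbrakk>Qs \<in> MTS M N; Q \<in> Qs; j \<in> {1,2}; 0 < q; q < 1\<rbrakk>
         \<Longrightarrow> (Qs - {Q}) \<union> bisect j q Q \<in> MTS M N"

fun verts :: "rect \<Rightarrow> (real \<times> real) set" where
  "verts (x, a, y, b) = {x, x+a} \<times> {y, y+b}"

fun vsk :: "rect \<Rightarrow> (real \<times> real) set" where
  "vsk (x, a, y, b) = {x, x+a} \<times> {y..y+b}"

fun hsk :: "rect \<Rightarrow> (real \<times> real) set" where
  "hsk (x, a, y, b) = {x..x+a} \<times> {y, y+b}"

definition meshV :: "rect set \<Rightarrow> (real \<times> real) set" where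
  "meshV Qs = (\<Union>Q\<in>Qs. verts Q)"

definition TQ :: "rect set \<Rightarrow> rect \<Rightarrow> (real \<times> real) set" where
  "TQ Qs Q = (meshV Qs \<inter> rect_pts Q) - verts Q"

definition Tmesh :: "rect set \<Rightarrow> (real \<times> real) set" where
  "Tmesh Qs = (\<Union>Q\<in>Qs. TQ Qs Q)"

definition ThQ :: "rect set \<Rightarrow> rect \<Rightarrow> (real \<times> real) set" where
  "ThQ Qs Q = {v \<in> TQ Qs Q. v \<in> vsk Q}"

definition TvQ :: "rect set \<Rightarrow> rect \<Rightarrow> (real \<times> real) set" where
  "TvQ Qs Q = {v \<in> TQ Qs Q. v \<in> hsk Q}"

definition Th_mesh :: "rect set \<Rightarrow> (real \<times> real) set" where
  "Th_mesh Qs = (\<Union>Q\<in>Qs. ThQ Qs Q)"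

definition Tv_mesh :: "rect set \<Rightarrow> (real \<times> real) set" where
  "Tv_mesh Qs = (\<Union>Q\<in>Qs. TvQ Qs Q)"

end

theory Submission
  imports Defs
begin

fun intr :: "rect \<Rightarrow> (real \<times> real) set" where
  "intr (x, a, y, b) = {x<..<x+a} \<times> {y<..<y+b}"

definition good :: "rect set \<Rightarrow> bool" where
  "good Qs \<longleftrightarrow> (\<forall>(x,a,y,b)\<in>Qs. 0 < a \<and> 0 < b) \<and>
     (\<forall>A\<in>Qs. \<forall>B\<in>Qs. A \<noteq> B \<longrightarrow> intr A \<inter> intr B = {})"

definition quad :: "rect \<Rightarrow> real \<times> real \<Rightarrow> real \<Rightarrow> real \<Rightarrow> bool" where
  "quad Q v dx dy \<longleftrightarrow> (\<exists>e>0. \<forall>t. 0 < t \<and> t < e \<longrightarrow> (fst v + dx*t, snd v + dy*t) \<in> intr Q)"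

lemma dir1:
  fixes l u p d :: real
  assumes "l < u" "d \<in> {-1,1}" "(p = l \<and> d = 1) \<or> (p = u \<and> d = -1) \<or> (l < p \<and> p < u)"
  shows "\<exists>e>0. \<forall>t. 0<t \<and> t<e \<longrightarrow> l < p+d*t \<and> p+d*t < u"
  using assms(3)
proof (elim disjE)
  assume "p = l \<and> d = 1" then show ?thesis using assms(1) by (intro exI[of _ "u-l"]) auto
next
  assume "p = u \<and> d = -1" then show ?thesis using assms(1) by (intro exI[of _ "u-l"]) auto
next
  assume h: "l < p \<and> p < u"
  show ?thesis
    using assms(2) h by (intro exI[of _ "min (p-l) (u-p)"]) auto
qed

lemma quad_intro:
  assumes "\<exists>e>0. \<forall>t. 0<t \<and> t<e \<longrightarrow> x < p+dx*t \<and> p+dx*t < x+a"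
    and "\<exists>e>0. \<forall>t. 0<t \<and> t<e \<longrightarrow> y < s+dy*t \<and> s+dy*t < y+b"
  shows "quad (x,a,y,b) (p,s) dx dy"
proof -
  obtain e1 where e1: "e1>0" "\<forall>t. 0<t \<and> t<e1 \<longrightarrow> x < p+dx*t \<and> p+dx*t < x+a" using assms(1) by blast
  obtain e2 where e2: "e2>0" "\<forall>t. 0<t \<and> t<e2 \<longrightarrow> y < s+dy*t \<and> s+dy*t < y+b" using assms(2) by blast
  show ?thesis unfolding quad_def
    using e1 e2 by (intro exI[of _ "min e1 e2"]) auto
qed

lemma sep:
  assumes "good Qs" "A \<in> Qs" "B \<in> Qs" "quad A v dx dy" "quad B v dx dy"
  shows "A = B"
proof (rule ccontr)
  assume ne: "A \<noteq> B"
  obtain e1 where e1: "e1>0" "\<forall>t. 0<t \<and> t<e1 \<longrightarrow> (fst v + dx*t, snd v + dy*t) \<in> intr A"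
    using assms(4) unfolding quad_def by blast
  obtain e2 where e2: "e2>0" "\<forall>t. 0<t \<and> t<e2 \<longrightarrow> (fst v + dx*t, snd v + dy*t) \<in> intr B"
    using assms(5) unfolding quad_def by blast
  define t where "t = min e1 e2 / 2"
  have t: "0 < t" "t < e1" "t < e2" using e1 e2 unfolding t_def by auto
  have "(fst v + dx*t, snd v + dy*t) \<in> intr A \<inter> intr B"
    using e1(2)[rule_format, of t] e2(2)[rule_format, of t] t by blast
  moreover have "intr A \<inter> intr B = {}" using assms(1,2,3) ne unfolding good_def by blast
  ultimately show False by blast
qed

lemma good_pos: "good Qs \<Longrightarrow> (x,a,y,b) \<in> Qs \<Longrightarrow> 0 < a \<and> 0 < b"
  unfolding good_def by fastforce

lemma quad_corner:
  assumes "0 < a" "0 < b" "v \<in> verts (x,a,y,b)"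
  shows "\<exists>dx dy. dx \<in> {-1,1} \<and> dy \<in> {-1,1} \<and> quad (x,a,y,b) v dx dy"
proof -
  obtain p s where v: "v = (p,s)" by (cases v)
  have px: "p = x \<or> p = x+a" and sy: "s = y \<or> s = y+b" using assms(3) v by auto
  obtain dx :: real where dx: "dx \<in> {-1,1}" "(p = x \<and> dx = 1) \<or> (p = x+a \<and> dx = -1)"
    using px by blast
  obtain dy :: real where dy: "dy \<in> {-1,1}" "(s = y \<and> dy = 1) \<or> (s = y+b \<and> dy = -1)"
    using sy by blast
  have "quad (x,a,y,b) (p,s) dx dy"
    by (intro quad_intro dir1; insert assms dx dy; auto)
  then show ?thesis using dx dy v by blast
qed

lemma quad_interior:
  assumes "v \<in> intr Q" "dx \<in> {-1,1}" "dy \<in> {-1,1}"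
  shows "quad Q v dx dy"
proof -
  obtain x a y b where Q: "Q = (x,a,y,b)" by (cases Q) auto
  obtain p s where v: "v = (p,s)" by (cases v)
  have h: "x < p" "p < x+a" "y < s" "s < y+b" using assms(1) Q v by auto
  have "quad (x,a,y,b) (p,s) dx dy"
    by (intro quad_intro dir1; insert h assms; auto)
  then show ?thesis using Q v by simp
qed

lemma quad_side:
  assumes "0 < a" "0 < b" "v \<in> rect_pts (x,a,y,b)" "v \<notin> verts (x,a,y,b)" "v \<notin> intr (x,a,y,b)"
  shows "(\<exists>d\<in>{-1,1}. quad (x,a,y,b) v d 1 \<and> quad (x,a,y,b) v d (-1))
       \<or> (\<exists>d\<in>{-1,1}. quad (x,a,y,b) v 1 d \<and> quad (x,a,y,b) v (-1) d)"
proof -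
  obtain p s where v: "v = (p,s)" by (cases v)
  have r: "x \<le> p" "p \<le> x+a" "y \<le> s" "s \<le> y+b" using assms(3) v by auto
  have nv: "\<not> ((p = x \<or> p = x+a) \<and> (s = y \<or> s = y+b))" using assms(4) v by auto
  have ni: "\<not> (x < p \<and> p < x+a \<and> y < s \<and> s < y+b)" using assms(5) v by simp
  consider (L) "p = x" | (R) "p = x+a" | (M) "x < p \<and> p < x+a" using r by linarith
  then show ?thesis
  proof cases
    case L
    then have hs: "y < s \<and> s < y+b" using nv r by linarith
    have q: "quad (x,a,y,b) (p,s) 1 dy" if "dy \<in> {-1,1}" for dy :: real
      by (intro quad_intro dir1; insert assms L hs that; auto)
    have "quad (x,a,y,b) v 1 1 \<and> quad (x,a,y,b) v 1 (-1)" using q[of 1] q[of "-1"] v by simp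
    then show ?thesis by (intro disjI1 bexI[of _ 1]) auto
  next
    case R
    then have hs: "y < s \<and> s < y+b" using nv r by linarith
    have q: "quad (x,a,y,b) (p,s) (-1) dy" if "dy \<in> {-1,1}" for dy :: real
      by (intro quad_intro dir1; insert assms R hs that; auto)
    have "quad (x,a,y,b) v (-1) 1 \<and> quad (x,a,y,b) v (-1) (-1)" using q[of 1] q[of "-1"] v by simp
    then show ?thesis by (intro disjI1 bexI[of _ "-1"]) auto
  next
    case M
    then have hs: "s = y \<or> s = y+b" using ni r by linarith
    obtain d :: real where d: "d \<in> {-1,1}" "(s = y \<and> d = 1) \<or> (s = y+b \<and> d = -1)" using hs by blast
    have q: "quad (x,a,y,b) (p,s) dx d" if "dx \<in> {-1,1}" for dx :: real
      by (intro quad_intro dir1; insert assms M that d; auto)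
    have "quad (x,a,y,b) v 1 d \<and> quad (x,a,y,b) v (-1) d" using q[of 1] q[of "-1"] v by simp
    then show ?thesis using d(1) by (intro disjI2 bexI[of _ d]) auto
  qed
qed

lemma not_intr:
  assumes "good Qs" "Q \<in> Qs" "R \<in> Qs" "v \<in> verts R" "v \<notin> verts Q"
  shows "v \<notin> intr Q"
proof
  assume vi: "v \<in> intr Q"
  obtain x a y b where Rr: "R = (x,a,y,b)" by (cases R) auto
  have "0 < a \<and> 0 < b" using good_pos assms(1,3) Rr by blast
  then obtain dx dy where d: "dx \<in> {-1,1}" "dy \<in> {-1,1}" "quad R v dx dy"
    using quad_corner[of a b v x y] assms(4) Rr by auto
  have "quad Q v dx dy" using quad_interior[OF vi d(1,2)] .
  then have "Q = R" using sep[OF assms(1,2,3) _ d(3)] by blast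
  then show False using assms by simp
qed

lemma TQ_side:
  assumes "good Qs" "Q \<in> Qs" "v \<in> TQ Qs Q"
  shows "v \<notin> intr Q"
proof -
  obtain R where "R \<in> Qs" "v \<in> verts R" using assms(3) unfolding TQ_def meshV_def by blast
  then show ?thesis using not_intr[OF assms(1,2)] assms(3) unfolding TQ_def by blast
qed


lemma comb:
  fixes qQ qQ' qR :: "real \<Rightarrow> real \<Rightarrow> bool"
  assumes "\<And>a b. qQ a b \<Longrightarrow> qQ' a b \<Longrightarrow> False"
    "\<And>a b. qQ a b \<Longrightarrow> qR a b \<Longrightarrow> False"
    "\<And>a b. qQ' a b \<Longrightarrow> qR a b \<Longrightarrow> False"
    "dx \<in> {-1,1}" "dy \<in> {-1,1}" "qR dx dy"
    "(\<exists>d\<in>{-1,1}. qQ d 1 \<and> qQ d (-1)) \<or> (\<exists>d\<in>{-1,1}. qQ 1 d \<and> qQ (-1) d)"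
    "(\<exists>d\<in>{-1,1}. qQ' d 1 \<and> qQ' d (-1)) \<or> (\<exists>d\<in>{-1,1}. qQ' 1 d \<and> qQ' (-1) d)"
  shows False
  using assms by auto metis+

lemma uniq:
  assumes g: "good Qs" and QQ: "Q \<in> Qs" "Q' \<in> Qs" and v: "v \<in> TQ Qs Q" "v \<in> TQ Qs Q'"
  shows "Q = Q'"
proof (rule ccontr)
  assume ne: "Q \<noteq> Q'"
  obtain R where R: "R \<in> Qs" "v \<in> verts R" using v(1) unfolding TQ_def meshV_def by blast
  have RQ: "R \<noteq> Q" "R \<noteq> Q'" using R v unfolding TQ_def by auto
  obtain x a y b where Rr: "R = (x,a,y,b)" by (cases R) auto
  have "0 < a \<and> 0 < b" using good_pos g R Rr by blast
  then obtain dx dy where d: "dx \<in> {-1,1}" "dy \<in> {-1,1}" "quad R v dx dy"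
    using quad_corner[of a b v x y] R(2) Rr by auto
  have side: "(\<exists>d\<in>{-1,1}. quad P v d 1 \<and> quad P v d (-1)) \<or> (\<exists>d\<in>{-1,1}. quad P v 1 d \<and> quad P v (-1) d)"
    if P: "P \<in> Qs" "v \<in> TQ Qs P" for P
  proof -
    obtain x a y b where Pr: "P = (x,a,y,b)" by (cases P) auto
    have "0 < a \<and> 0 < b" using good_pos g P Pr by blast
    moreover have "v \<notin> intr P" using TQ_side[OF g P] .
    ultimately show ?thesis using quad_side[of a b v x y] P(2) Pr unfolding TQ_def by auto
  qed
  show False
    apply (rule comb[where qQ="quad Q v" and qQ'="quad Q' v" and qR="quad R v", OF _ _ _ d])
    using sep[OF g] QQ R(1) ne RQ side[OF QQ(1) v(1)] side[OF QQ(2) v(2)] by metis+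
qed


lemma good_base: "good (Q0 M N)"
proof -
  have pos: "\<forall>(x,a,y,b)\<in>Q0 M N. 0 < a \<and> 0 < b" unfolding Q0_def by auto
  have disj: "intr A \<inter> intr B = {}" if A: "A \<in> Q0 M N" and B: "B \<in> Q0 M N" and ne: "A \<noteq> B" for A B
  proof -
    obtain m n where An: "A = (real m - 1, 1, real n - 1, 1)" using A unfolding Q0_def by blast
    obtain m' n' where Bn: "B = (real m' - 1, 1, real n' - 1, 1)" using B unfolding Q0_def by blast
    show ?thesis
    proof (rule ccontr)
      assume "intr A \<inter> intr B \<noteq> {}"
      then obtain p s where ps: "(p,s) \<in> intr A" "(p,s) \<in> intr B" by auto
      have h: "real m - 1 < p" "p < real m" "real m' - 1 < p" "p < real m'"
              "real n - 1 < s" "s < real n" "real n' - 1 < s" "s < real n'"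
        using ps An Bn by auto
      have "real m < real m' + 1" "real m' < real m + 1" "real n < real n' + 1" "real n' < real n + 1"
        using h by linarith+
      then have "m = m'" "n = n'" by linarith+
      then show False using ne An Bn by simp
    qed
  qed
  show ?thesis unfolding good_def using pos disj by blast
qed

lemma intr_bisect:
  assumes "P \<in> bisect j q (x,a,y,b)" "0 < q" "q < 1" "0 < a" "0 < b"
  shows "intr P \<subseteq> intr (x,a,y,b)"
proof -
  have h: "q*a < a" "q*b < b" "0 < q*a" "0 < q*b" using assms by simp_all
  show ?thesis using assms
    by (cases "j = 1"; auto; insert h; linarith)
qed

lemma bisect_pos:
  assumes "P \<in> bisect j q (x,a,y,b)" "0 < q" "q < 1" "0 < a" "0 < b"
  shows "0 < fst (snd P) \<and> 0 < snd (snd (snd P))"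
proof -
  have h: "q*a < a" "q*b < b" "0 < q*a" "0 < q*b" using assms by simp_all
  show ?thesis using assms
    by (cases "j = 1"; auto; insert h; linarith)
qed

lemma bisect_disj:
  assumes "P \<in> bisect j q (x,a,y,b)" "P' \<in> bisect j q (x,a,y,b)" "P \<noteq> P'"
  shows "intr P \<inter> intr P' = {}"
  using assms by (cases "j = 1") auto


lemma good_step:
  assumes g: "good Qs" and Q: "Q \<in> Qs" and q: "0 < q" "q < 1"
  shows "good ((Qs - {Q}) \<union> bisect j q Q)"
proof -
  obtain x a y b where Qr: "Q = (x,a,y,b)" by (cases Q) auto
  have ab: "0 < a" "0 < b" using good_pos g Q Qr by auto
  let ?N = "(Qs - {Q}) \<union> bisect j q Q"
  have pos: "\<forall>(x',a',y',b')\<in>?N. 0 < a' \<and> 0 < b'"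
  proof
    fix P assume P: "P \<in> ?N"
    show "case P of (x',a',y',b') \<Rightarrow> 0 < a' \<and> 0 < b'"
    proof (cases "P \<in> bisect j q Q")
      case True
      then show ?thesis using bisect_pos[of P j q x a y b] Qr q ab by (cases P) auto
    next
      case False
      then have "P \<in> Qs" using P by auto
      then show ?thesis using g unfolding good_def by auto
    qed
  qed
  have disj: "intr A \<inter> intr B = {}" if A: "A \<in> ?N" and B: "B \<in> ?N" and ne: "A \<noteq> B" for A B
  proof -
    have old: "intr C \<inter> intr D = {}" if "C \<in> Qs" "D \<in> Qs" "C \<noteq> D" for C D
      using g that unfolding good_def by blast
    consider (oo) "A \<in> Qs - {Q}" "B \<in> Qs - {Q}" | (on) "A \<in> Qs - {Q}" "B \<in> bisect j q Q"
      | (no) "A \<in> bisect j q Q" "B \<in> Qs - {Q}" | (nn) "A \<in> bisect j q Q" "B \<in> bisect j q Q"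
      using A B by blast
    then show ?thesis
    proof cases
      case oo then show ?thesis using old ne by auto
    next
      case on
      have "intr B \<subseteq> intr Q" using intr_bisect[of B j q x a y b] on Qr q ab by auto
      moreover have "intr A \<inter> intr Q = {}" using old[of A Q] on Q by auto
      ultimately show ?thesis by blast
    next
      case no
      have "intr A \<subseteq> intr Q" using intr_bisect[of A j q x a y b] no Qr q ab by auto
      moreover have "intr B \<inter> intr Q = {}" using old[of B Q] no Q by auto
      ultimately show ?thesis by blast
    next
      case nn then show ?thesis using bisect_disj[of A j q x a y b B] Qr ne by auto
    qed
  qed
  show ?thesis unfolding good_def using pos disj by blast
qed

lemma good_MTS: "Qs \<in> MTS M N \<Longrightarrow> good Qs"
  by (induction rule: MTS.induct) (auto intro: good_base good_step)

lemma bdry: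
  assumes "v \<in> rect_pts Q" "v \<notin> intr Q"
  shows "v \<in> vsk Q \<or> v \<in> hsk Q"
proof -
  obtain x a y b where Qr: "Q = (x,a,y,b)" by (cases Q) auto
  obtain p s where v: "v = (p,s)" by (cases v)
  have r: "x \<le> p" "p \<le> x+a" "y \<le> s" "s \<le> y+b" using assms(1) Qr v by auto
  have ni: "\<not> (x < p \<and> p < x+a \<and> y < s \<and> s < y+b)" using assms(2) Qr v by simp
  have "(p = x \<or> p = x+a) \<or> (s = y \<or> s = y+b)" using r ni by linarith
  then show ?thesis using r Qr v by auto
qed

lemma vh_verts: "v \<in> vsk Q \<Longrightarrow> v \<in> hsk Q \<Longrightarrow> v \<in> verts Q"
  by (cases Q) auto

theorem mainTheorem1:
  fixes M N :: nat and Qs :: "rect set"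
  assumes "Qs \<in> MTS M N"
  shows "(\<forall>v\<in>Tmesh Qs. \<exists>!Q. Q \<in> Qs \<and> v \<in> TQ Qs Q)
         \<and> Th_mesh Qs \<inter> Tv_mesh Qs = {}
         \<and> Th_mesh Qs \<union> Tv_mesh Qs = Tmesh Qs"
proof -
  have g: "good Qs" using good_MTS assms .
  have p1: "\<forall>v\<in>Tmesh Qs. \<exists>!Q. Q \<in> Qs \<and> v \<in> TQ Qs Q"
  proof
    fix v assume "v \<in> Tmesh Qs"
    then obtain Q where Q: "Q \<in> Qs" "v \<in> TQ Qs Q" unfolding Tmesh_def by blast
    show "\<exists>!Q. Q \<in> Qs \<and> v \<in> TQ Qs Q"
      using Q uniq[OF g] by blast
  qed
  have p2: "Th_mesh Qs \<inter> Tv_mesh Qs = {}"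
  proof (rule ccontr)
    assume "Th_mesh Qs \<inter> Tv_mesh Qs \<noteq> {}"
    then obtain v Q Q' where Q: "Q \<in> Qs" "v \<in> ThQ Qs Q" and Q': "Q' \<in> Qs" "v \<in> TvQ Qs Q'"
      unfolding Th_mesh_def Tv_mesh_def by blast
    have "Q = Q'" using uniq[OF g Q(1) Q'(1)] Q(2) Q'(2) unfolding ThQ_def TvQ_def by blast
    then have "v \<in> verts Q" using vh_verts Q(2) Q'(2) unfolding ThQ_def TvQ_def by blast
    then show False using Q(2) unfolding ThQ_def TQ_def by blast
  qed
  have p3: "Th_mesh Qs \<union> Tv_mesh Qs = Tmesh Qs"
  proof
    show "Th_mesh Qs \<union> Tv_mesh Qs \<subseteq> Tmesh Qs"
      unfolding Th_mesh_def Tv_mesh_def Tmesh_def ThQ_def TvQ_def by blast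
  next
    show "Tmesh Qs \<subseteq> Th_mesh Qs \<union> Tv_mesh Qs"
    proof
      fix v assume "v \<in> Tmesh Qs"
      then obtain Q where Q: "Q \<in> Qs" "v \<in> TQ Qs Q" unfolding Tmesh_def by blast
      have "v \<notin> intr Q" using TQ_side[OF g Q] .
      moreover have "v \<in> rect_pts Q" using Q(2) unfolding TQ_def by blast
      ultimately have "v \<in> vsk Q \<or> v \<in> hsk Q" using bdry by blast
      then show "v \<in> Th_mesh Qs \<union> Tv_mesh Qs"
        using Q unfolding Th_mesh_def Tv_mesh_def ThQ_def TvQ_def by blast
    qed
  qed
  show ?thesis using p1 p2 p3 by blast
qed

end
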